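(* Let $\phi$ be a singular-expansive flow of a compact metric space $X$. Then for every compact invariant set $\Lambda\subset X$ with $\Lambda\cap Sing(\phi)=\emptyset$, the restricted flow $\phi|_\Lambda$ is expansive.
   Context: A flow is a continuous $\phi:\mathbb{R}\times X\to X$ with $\phi_0=\mathrm{id}$, $\phi_{t+s}=\phi_t\circ\phi_s$; $\phi_I(x)=\{\phi_t(x):t\in I\}$; $Sing(\phi)$ is the set of fixed points; $dist(z,A)=\inf_{a\in A}d(z,a)$, with $dist(z,\emptyset)=diam(X)$; $\Lambda$ invariant means $\phi_t(\Lambda)=\Lambda$ for all $t$. $\phi$ is singular-expansive if for every $\epsilon>0$ there is $\delta>0$ such that whenever $x,y\in X$ and an increasing homeomorphism $s:\mathbb{R}\to\mathbb{R}$ satisfy $d(\phi_t(x),\phi_{s(t)}(y))\le\delta\,dist(\phi_t(x),Sing(\phi))$ for all $t$, then $\phi_{s(t_0)}(y)\in\phi_{[t_0-\epsilon,t_0+\epsilon]}(x)$ for some $t_0\in\mathbb{R}$. A flow $\psi$ on a compact metric space $Y$ is expansive if for every $\epsilon>0$ there is $\delta>0$ such that whenever $x,y\in Y$ and a continuous $s:\mathbb{R}\to\mathbb{R}$ with $s(0)=0$ satisfy $d(\psi_t(x),\psi_{s(t)}(y))\le\delta$ for all $t$, then $y\in\psi_{[-\epsilon,\epsilon]}(x)$. *)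

theory Defs
  imports "HOL-Analysis.Analysis"
begin

definition is_flow :: "'a::metric_space set \<Rightarrow> (real \<Rightarrow> 'a \<Rightarrow> 'a) \<Rightarrow> bool" where
  "is_flow X phi \<longleftrightarrow>
     continuous_on (UNIV \<times> X) (\<lambda>(t, x). phi t x) \<and>
     (\<forall>t. \<forall>x\<in>X. phi t x \<in> X) \<and>
     (\<forall>x\<in>X. phi 0 x = x) \<and>
     (\<forall>t s. \<forall>x\<in>X. phi (t + s) x = phi t (phi s x))"

definition Sing :: "'a set \<Rightarrow> (real \<Rightarrow> 'a \<Rightarrow> 'a) \<Rightarrow> 'a set" where
  "Sing X phi = {x \<in> X. \<forall>t. phi t x = x}"

definition distX :: "'a::metric_space set \<Rightarrow> 'a \<Rightarrow> 'a set \<Rightarrow> real" where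
  "distX X z A = (if A = {} then diameter X else infdist z A)"

definition singular_expansive :: "'a::metric_space set \<Rightarrow> (real \<Rightarrow> 'a \<Rightarrow> 'a) \<Rightarrow> bool" where
  "singular_expansive X phi \<longleftrightarrow>
     (\<forall>\<epsilon>>0. \<exists>\<delta>>0. \<forall>x\<in>X. \<forall>y\<in>X. \<forall>s::real \<Rightarrow> real.
        (mono s \<and> (\<exists>g. homeomorphism UNIV UNIV s g) \<and>
         (\<forall>t. dist (phi t x) (phi (s t) y) \<le> \<delta> * distX X (phi t x) (Sing X phi)))
        \<longrightarrow> (\<exists>t0. phi (s t0) y \<in> (\<lambda>t. phi t x) ` {t0 - \<epsilon> .. t0 + \<epsilon>}))"

definition expansive_flow :: "'a::metric_space set \<Rightarrow> (real \<Rightarrow> 'a \<Rightarrow> 'a) \<Rightarrow> bool" where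
  "expansive_flow Y psi \<longleftrightarrow>
     (\<forall>\<epsilon>>0. \<exists>\<delta>>0. \<forall>x\<in>Y. \<forall>y\<in>Y. \<forall>s::real \<Rightarrow> real.
        (continuous_on UNIV s \<and> s 0 = 0 \<and> (\<forall>t. dist (psi t x) (psi (s t) y) \<le> \<delta>))
        \<longrightarrow> y \<in> (\<lambda>t. psi t x) ` {-\<epsilon> .. \<epsilon>})"

end

theory Submission
  imports Defs
begin


lemma antideriv_real:
  fixes s :: "real \<Rightarrow> real"
  assumes "continuous_on UNIV s"
  shows "\<exists>S. \<forall>x. (S has_real_derivative s x) (at x)"
proof -
  have "\<exists>F. \<forall>x :: real. (-\<infinity>::ereal) < x \<longrightarrow> x < (\<infinity>::ereal) \<longrightarrow> (F has_vector_derivative s x) (at x)"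
    by (rule einterval_antiderivative) (use assms in \<open>auto simp: continuous_on_eq_continuous_at\<close>)
  then obtain F where "\<forall>x::real. (F has_vector_derivative s x) (at x)" by auto
  then show ?thesis by (auto simp: has_real_derivative_iff_has_vector_derivative)
qed

lemma reparam:
  fixes s :: "real \<Rightarrow> real" and c :: real
  assumes c: "c > 0" and sc: "continuous_on UNIV s"
    and F: "\<And>t a. 0 \<le> a \<Longrightarrow> a \<le> 3*c \<Longrightarrow> \<bar>s (t+a) - s t - a\<bar> < c"
  shows "\<exists>h. mono h \<and> (\<exists>g. homeomorphism UNIV UNIV h g) \<and> (\<forall>t. \<bar>h t - s t\<bar> \<le> c)"
proof -
  obtain S where S: "\<And>x. (S has_real_derivative s x) (at x)" using antideriv_real[OF sc] by blast
  define T where "T = 3*c"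
  have T: "T > 0" using c by (simp add: T_def)
  define h where "h t = (S (t+T) - S t)/T - T/2" for t
  have dh: "(h has_real_derivative (s (t+T) - s t)/T) (at t)" for t
    unfolding h_def using T
    by (auto intro!: derivative_eq_intros DERIV_chain2[OF S] simp: field_simps)
  have close: "\<bar>h t - s t\<bar> \<le> c" for t
  proof -
    define psi where "psi a = S (t+a) - S t - a * s t - a^2/2" for a
    have dpsi: "(psi has_real_derivative (s (t+a) - s t - a)) (at a)" for a
      unfolding psi_def
      by (auto intro!: derivative_eq_intros DERIV_chain2[OF S] simp: field_simps)
    obtain z where z: "0 < z" "z < T" "psi T - psi 0 = (T - 0) * (s (t+z) - s t - z)"
      using MVT2[OF T, of psi "\<lambda>a. s (t+a) - s t - a"] dpsi by blast
    have "psi T - psi 0 = T * (h t - s t)"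
      unfolding psi_def h_def using T by (simp add: field_simps power2_eq_square)
    with z T have "h t - s t = s (t+z) - s t - z" by simp
    moreover have "\<bar>s (t+z) - s t - z\<bar> < c" using F[of z t] z by (simp add: T_def)
    ultimately show ?thesis by simp
  qed
  have lower: "h b - h a \<ge> (2/3) * (b - a)" if ab: "a < b" for a b
  proof -
    obtain z where z: "a < z" "z < b" "h b - h a = (b - a) * ((s (z+T) - s z)/T)"
      using MVT2[OF ab, of h "\<lambda>t. (s (t+T) - s t)/T"] dh by blast
    have "\<bar>s (z+T) - s z - T\<bar> < c" using F[of T z] c by (simp add: T_def)
    hence "(s (z+T) - s z)/T \<ge> 2/3" using c by (simp add: T_def field_simps abs_if split: if_splits)
    hence "(b - a) * (2/3) \<le> (b - a) * ((s (z+T) - s z)/T)" using ab by (intro mult_left_mono) auto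
    with z show ?thesis by simp
  qed
  have lower': "\<bar>h b - h a\<bar> \<ge> (2/3) * \<bar>b - a\<bar>" for a b
    using lower[of a b] lower[of b a] by (cases "a < b"; cases "b < a") auto
  have smono: "strict_mono h"
    by (rule strict_monoI) (use lower in \<open>fastforce\<close>)
  have hc: "continuous_on UNIV h"
    using dh by (meson DERIV_isCont continuous_at_imp_continuous_on)
  have surj: "\<exists>x. h x = y" for y
  proof -
    define M where "M = \<bar>y\<bar> + \<bar>h 0\<bar> + 1"
    have M: "M > 0" by (simp add: M_def add_pos_nonneg)
    have "h (2*M) - h 0 \<ge> (2/3)*(2*M)" using lower[of 0 "2*M"] M by simp
    moreover have "y + \<bar>h 0\<bar> \<le> M" "- h 0 \<le> \<bar>h 0\<bar>" "y \<le> \<bar>y\<bar>" "-y \<le> \<bar>y\<bar>" "h 0 \<le> \<bar>h 0\<bar>" "-y + \<bar>h 0\<bar> \<le> M"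
      unfolding M_def by auto
    ultimately have a: "y \<le> h (2*M)" using M by linarith
    have "h 0 - h (-2*M) \<ge> (2/3)*(2*M)" using lower[of "-2*M" 0] M by simp
    moreover have "y + \<bar>h 0\<bar> \<le> M" "- h 0 \<le> \<bar>h 0\<bar>" "y \<le> \<bar>y\<bar>" "-y \<le> \<bar>y\<bar>" "h 0 \<le> \<bar>h 0\<bar>" "-y + \<bar>h 0\<bar> \<le> M"
      unfolding M_def by auto
    ultimately have b: "h (-2*M) \<le> y" using M by linarith
    show ?thesis using IVT'[of h "-2*M" y "2*M"] a b M continuous_on_subset[OF hc] by auto
  qed
  define g where "g y = (THE x. h x = y)" for y
  have hg: "h (g y) = y" for y
    unfolding g_def using surj[of y] strict_mono_eq[OF smono] by (metis (mono_tags) theI)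
  have gh: "g (h x) = x" for x
    unfolding g_def using strict_mono_eq[OF smono] by auto
  have gc: "continuous_on UNIV g"
    unfolding continuous_on_iff
  proof (intro ballI allI impI)
    fix x e :: real assume e: "0 < e"
    show "\<exists>d>0. \<forall>x'\<in>UNIV. dist x' x < d \<longrightarrow> dist (g x') (g x) < e"
    proof (intro exI[of _ "(2/3)*e"] conjI ballI impI)
      fix x' assume "dist x' x < 2/3*e"
      moreover have "\<bar>h (g x') - h (g x)\<bar> \<ge> (2/3)*\<bar>g x' - g x\<bar>" by (rule lower')
      ultimately show "dist (g x') (g x) < e" by (simp add: hg dist_real_def)
    qed (use e in auto)
  qed
  have "homeomorphism UNIV UNIV h g"
    by (rule homeomorphismI) (use hc gc hg gh in auto)
  moreover have "mono h" using smono by (simp add: strict_mono_mono)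
  ultimately show ?thesis using close by blast
qed



locale lamflow =
  fixes X :: "'a::metric_space set" and phi :: "real \<Rightarrow> 'a \<Rightarrow> 'a" and L :: "'a set"
  assumes flow: "is_flow X phi" and LX: "L \<subseteq> X" and cL: "compact L"
    and inv: "\<forall>t. phi t ` L = L" and disj: "L \<inter> Sing X phi = {}"
begin

lemma grp: "x \<in> X \<Longrightarrow> phi (a+b) x = phi a (phi b x)"
  using flow unfolding is_flow_def by blast
lemma id0: "x \<in> X \<Longrightarrow> phi 0 x = x"
  using flow unfolding is_flow_def by blast
lemma inL: "x \<in> L \<Longrightarrow> phi t x \<in> L"
  using inv by blast
lemma inX: "x \<in> L \<Longrightarrow> x \<in> X" using LX by blast
lemma backw: "x \<in> X \<Longrightarrow> phi a (phi (-a) x) = x"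
  using grp[of x a "-a"] id0 by simp
lemma contL: "continuous_on (UNIV \<times> L) (\<lambda>(t,x). phi t x)"
  using flow LX unfolding is_flow_def by (meson continuous_on_subset order_refl subset_refl Sigma_mono)
lemma cont_t: "x \<in> L \<Longrightarrow> continuous_on UNIV (\<lambda>t. phi t x)"
proof -
  assume x: "x \<in> L"
  have "continuous_on UNIV ((\<lambda>(t,x). phi t x) \<circ> (\<lambda>t. (t, x)))"
    by (rule continuous_on_compose) (auto intro!: continuous_intros continuous_on_subset[OF contL] simp: x)
  then show ?thesis by (simp add: o_def)
qed
lemma cont_x: "continuous_on L (phi t)"
proof -
  have "continuous_on L ((\<lambda>(t,x). phi t x) \<circ> (\<lambda>x. (t, x)))"
    by (rule continuous_on_compose) (auto intro!: continuous_intros continuous_on_subset[OF contL])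
  then show ?thesis by (simp add: o_def)
qed

lemma int_mult: assumes w: "w \<in> X" and p: "phi b w = w" shows "phi (of_int k * b) w = w"
proof -
  have nat: "phi (of_nat n * b) w = w" for n :: nat
  proof (induction n)
    case 0 then show ?case using id0 w by simp
  next
    case (Suc n)
    have "phi (of_nat (Suc n) * b) w = phi b (phi (of_nat n * b) w)"
      using grp[OF w, of b "of_nat n * b"] by (simp add: algebra_simps)
    then show ?case using Suc p by simp
  qed
  show ?thesis
  proof (cases "k \<ge> 0")
    case True
    then obtain n where "k = int n" using nonneg_int_cases by blast
    then show ?thesis using nat[of n] by simp
  next
    case False
    then obtain n where k: "k = - int n" by (intro that[of "nat (-k)"]) simp
    have "phi (- (of_nat n * b)) (phi (of_nat n * b) w) = w"
      using grp[OF w, of "- (of_nat n * b)" "of_nat n * b"] id0[OF w] by simp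
    then show ?thesis using nat[of n] k by simp
  qed
qed

lemma min_period: "\<exists>\<tau>>0. \<forall>w\<in>L. \<forall>b. 0 < b \<and> b \<le> \<tau> \<longrightarrow> phi b w \<noteq> w"
proof (rule ccontr)
  assume "\<not> ?thesis"
  hence "\<forall>n::nat. \<exists>w\<in>L. \<exists>b. 0 < b \<and> b \<le> 1/(real n+1) \<and> phi b w = w"
    by (metis (no_types, lifting) divide_pos_pos of_nat_0_le_iff add_nonneg_pos zero_less_one)
  then obtain w b where wb: "\<And>n. w n \<in> L \<and> 0 < b n \<and> b n \<le> 1/(real n+1) \<and> phi (b n) (w n) = w n"
    by metis
  obtain l r where l: "l \<in> L" "strict_mono r" "(w \<circ> r) \<longlonglongrightarrow> l"
    using seq_compactE[OF compact_imp_seq_compact[OF cL], of w] wb by blast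
  have fix_l: "phi t l = l" for t
  proof -
    define q where "q n = b (r n) * of_int \<lfloor>t / b (r n)\<rfloor>" for n
    have b0: "(\<lambda>n. b (r n)) \<longlonglongrightarrow> 0"
    proof (rule tendsto_sandwich[of "\<lambda>n. 0" _ _ "\<lambda>n. 1/(real n+1)"])
      show "\<forall>\<^sub>F n in sequentially. 0 \<le> b (r n)" using wb by (simp add: less_imp_le)
      show "\<forall>\<^sub>F n in sequentially. b (r n) \<le> 1/(real n+1)"
      proof (rule always_eventually, rule allI)
        fix n
        have "real n \<le> real (r n)" using seq_suble[OF l(2)] by simp
        hence "1/(real (r n)+1) \<le> 1/(real n+1)" by (intro divide_left_mono) auto
        then show "b (r n) \<le> 1/(real n+1)" using wb[of "r n"] by linarith
      qed
      show "(\<lambda>n. 1/(real n+1)) \<longlonglongrightarrow> 0" using LIMSEQ_inverse_real_of_nat by (simp add: inverse_eq_divide add.commute)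
    qed auto
    have qt: "q \<longlonglongrightarrow> t"
    proof (rule tendsto_sandwich[of "\<lambda>n. t - b (r n)" _ _ "\<lambda>n. t"])
      have bound: "t - b (r n) \<le> q n \<and> q n \<le> t" for n
      proof -
        have bp: "b (r n) > 0" using wb by simp
        have "t / b (r n) - 1 < of_int \<lfloor>t / b (r n)\<rfloor>" "of_int \<lfloor>t / b (r n)\<rfloor> \<le> t / b (r n)"
          by linarith+
        then have A: "b (r n) * (t / b (r n) - 1) \<le> q n" and B: "q n \<le> b (r n) * (t / b (r n))"
          unfolding q_def using bp mult_left_mono[of "of_int \<lfloor>t / b (r n)\<rfloor>" "t / b (r n)" "b (r n)"]
            mult_left_mono[of "t / b (r n) - 1" "of_int \<lfloor>t / b (r n)\<rfloor>" "b (r n)"] by (simp_all del: times_divide_eq_right)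
        have "b (r n) * (t / b (r n)) = t" using bp by simp
        then show ?thesis using A B by (simp add: algebra_simps)
      qed
      show "\<forall>\<^sub>F n in sequentially. t - b (r n) \<le> q n" using bound by simp
      show "\<forall>\<^sub>F n in sequentially. q n \<le> t" using bound by simp
      show "(\<lambda>n. t - b (r n)) \<longlonglongrightarrow> t" using tendsto_diff[OF tendsto_const b0] by simp
    qed simp
    have eq: "phi (q n) (w (r n)) = w (r n)" for n
      unfolding q_def using int_mult[of "w (r n)" "b (r n)" "\<lfloor>t / b (r n)\<rfloor>"] wb[of "r n"] inX
      by (simp add: mult.commute)
    have "((\<lambda>n. (\<lambda>(t,x). phi t x) (q n, w (r n))) \<longlonglongrightarrow> (\<lambda>(t,x). phi t x) (t, l))"
      by (rule continuous_on_tendsto_compose[OF contL])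
        (use l qt wb in \<open>auto intro!: tendsto_Pair simp: o_def\<close>)
    hence "(\<lambda>n. w (r n)) \<longlonglongrightarrow> phi t l" using eq by simp
    moreover have "(\<lambda>n. w (r n)) \<longlonglongrightarrow> l" using l(3) by (simp add: o_def)
    ultimately show ?thesis using LIMSEQ_unique by metis
  qed
  then have "l \<in> Sing X phi" using l(1) inX unfolding Sing_def by auto
  then show False using disj l(1) by blast
qed

lemma cont_xX: "continuous_on X (phi t)"
proof -
  have "continuous_on X ((\<lambda>(t,x). phi t x) \<circ> (\<lambda>x. (t, x)))"
  proof (rule continuous_on_compose)
    show "continuous_on X (\<lambda>x. (t, x))" by (intro continuous_intros)
    have "continuous_on (UNIV \<times> X) (\<lambda>(t,x). phi t x)" using flow by (simp add: is_flow_def)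
    then show "continuous_on ((\<lambda>x. (t, x)) ` X) (\<lambda>(t,x). phi t x)"
      by (rule continuous_on_subset) auto
  qed
  then show ?thesis by (simp add: o_def)
qed

lemma gap:
  assumes c: "0 < c" "c \<le> \<tau>" and tau: "\<forall>w\<in>L. \<forall>b. 0 < b \<and> b \<le> \<tau> \<longrightarrow> phi b w \<noteq> w"
    and ne: "L \<noteq> {}"
  shows "\<exists>m>0. \<forall>w\<in>L. dist (phi c w) w \<ge> m \<and> dist (phi (-c) w) w \<ge> m"
proof -
  have "continuous_on L (\<lambda>w. dist (phi c w) w)"
    by (intro continuous_intros cont_x)
  then obtain w0 where w0: "w0 \<in> L" "\<forall>w\<in>L. dist (phi c w0) w0 \<le> dist (phi c w) w"
    using continuous_attains_inf[OF cL ne] by blast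
  have pos: "dist (phi c w0) w0 > 0" using tau w0(1) c by auto
  show ?thesis
  proof (intro exI[of _ "dist (phi c w0) w0"] conjI ballI pos)
    fix w assume w: "w \<in> L"
    show "dist (phi c w0) w0 \<le> dist (phi c w) w" using w0 w by blast
    have w': "phi (-c) w \<in> L" using inL w by blast
    have "phi c (phi (-c) w) = w" using backw[of w c] inX w by simp
    hence "dist (phi (-c) w) w = dist (phi c (phi (-c) w)) (phi (-c) w)" by (simp add: dist_commute)
    then show "dist (phi c w0) w0 \<le> dist (phi (-c) w) w" using w0 w' by simp
  qed
qed

lemma U1:
  assumes e: "e > 0"
  shows "\<exists>d>0. \<forall>z\<in>L. \<forall>r. \<bar>r\<bar> \<le> d \<longrightarrow> dist (phi r z) z < e"
proof -
  have "uniformly_continuous_on ({-1..1} \<times> L) (\<lambda>(t,x). phi t x)"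
    by (intro compact_uniformly_continuous compact_Times cL compact_Icc continuous_on_subset[OF contL]) auto
  then obtain d0 where d0: "d0 > 0" "\<forall>p\<in>{-1..1} \<times> L. \<forall>p'\<in>{-1..1} \<times> L. dist p' p < d0 \<longrightarrow>
      dist ((\<lambda>(t,x). phi t x) p') ((\<lambda>(t,x). phi t x) p) < e"
    unfolding uniformly_continuous_on_def using e by blast
  show ?thesis
  proof (intro exI[of _ "min (1/2) (d0/2)"] conjI allI ballI impI)
    fix z r assume z: "z \<in> L" and r: "\<bar>r\<bar> \<le> min (1/2) (d0/2)"
    have "dist (r, z) (0, z) < d0" using r d0 by (simp add: dist_Pair_Pair dist_real_def)
    moreover have "(r,z) \<in> {-1..1} \<times> L" "(0::real,z) \<in> {-1..1} \<times> L" using r z by auto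
    ultimately have "dist (phi r z) (phi 0 z) < e" using d0(2) by fastforce
    then show "dist (phi r z) z < e" using id0 inX z by simp
  qed (use d0 in auto)
qed

lemma U2:
  assumes e: "e > 0"
  shows "\<exists>d>0. \<forall>z\<in>L. \<forall>z'\<in>L. \<forall>a. 0 \<le> a \<and> a \<le> A \<and> dist z z' \<le> d \<longrightarrow> dist (phi a z) (phi a z') < e"
proof -
  have "uniformly_continuous_on ({0..A} \<times> L) (\<lambda>(t,x). phi t x)"
    by (intro compact_uniformly_continuous compact_Times cL compact_Icc continuous_on_subset[OF contL]) auto
  then obtain d0 where d0: "d0 > 0" "\<forall>p\<in>{0..A} \<times> L. \<forall>p'\<in>{0..A} \<times> L. dist p' p < d0 \<longrightarrow>
      dist ((\<lambda>(t,x). phi t x) p') ((\<lambda>(t,x). phi t x) p) < e"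
    unfolding uniformly_continuous_on_def using e by blast
  show ?thesis
  proof (intro exI[of _ "d0/2"] conjI allI ballI impI)
    fix z z' a assume z: "z \<in> L" "z' \<in> L" and a: "0 \<le> a \<and> a \<le> A \<and> dist z z' \<le> d0/2"
    have "dist (a, z) (a, z') < d0" using a d0 by (simp add: dist_Pair_Pair)
    moreover have "(a,z) \<in> {0..A} \<times> L" "(a,z') \<in> {0..A} \<times> L" using a z by auto
    ultimately show "dist (phi a z) (phi a z') < e" using d0(2) by fastforce
  qed (use d0 in auto)
qed

lemma Kbound:
  assumes cX: "compact X" and ne: "L \<noteq> {}"
  shows "\<exists>\<kappa>>0. \<forall>z\<in>L. distX X z (Sing X phi) \<ge> \<kappa>"
proof (cases "Sing X phi = {}")
  case True
  obtain w where w: "w \<in> L" using ne by blast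
  then obtain t where t: "phi t w \<noteq> w" using disj inX unfolding Sing_def by blast
  have "dist (phi t w) w \<le> diameter X"
    by (rule diameter_bounded_bound) (use cX compact_imp_bounded w inL inX in auto)
  moreover have "dist (phi t w) w > 0" using t by simp
  ultimately have "diameter X > 0" by linarith
  then show ?thesis unfolding distX_def using True
    by (intro exI[of _ "diameter X"]) auto
next
  case False
  have cS: "closed (Sing X phi)"
    unfolding closed_sequential_limits
  proof (intro allI impI)
    fix x l assume H: "(\<forall>n. x n \<in> Sing X phi) \<and> x \<longlonglongrightarrow> l"
    have lX: "l \<in> X" using compact_imp_closed[OF cX] H unfolding closed_sequential_limits Sing_def by blast
    have "phi t l = l" for t
    proof -
      have "(\<lambda>n. phi t (x n)) \<longlonglongrightarrow> phi t l"
        by (rule continuous_on_tendsto_compose[OF cont_xX]) (use H lX in \<open>auto simp: Sing_def\<close>)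
      moreover have "(\<lambda>n. phi t (x n)) = x" using H unfolding Sing_def by auto
      ultimately show ?thesis using H LIMSEQ_unique by metis
    qed
    then show "l \<in> Sing X phi" using lX unfolding Sing_def by auto
  qed
  have "continuous_on L (\<lambda>z. infdist z (Sing X phi))"
    by (intro continuous_intros)
  then obtain z0 where z0: "z0 \<in> L" "\<forall>z\<in>L. infdist z0 (Sing X phi) \<le> infdist z (Sing X phi)"
    using continuous_attains_inf[OF cL ne] by blast
  have "infdist z0 (Sing X phi) > 0"
    by (rule infdist_pos_not_in_closed[OF cS False]) (use z0 disj in blast)
  then show ?thesis unfolding distX_def using False z0
    by (intro exI[of _ "infdist z0 (Sing X phi)"]) auto
qed

end


context lamflow begin

lemma expansive_part:
  assumes cX: "compact X" and SE: "singular_expansive X phi" and ne: "L \<noteq> {}"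
  shows "expansive_flow L phi"
  unfolding expansive_flow_def
proof (intro allI impI)
  fix \<epsilon> :: real assume eps: "\<epsilon> > 0"
  obtain \<kappa> where kap: "\<kappa> > 0" "\<forall>z\<in>L. distX X z (Sing X phi) \<ge> \<kappa>" using Kbound[OF cX ne] by blast
  obtain \<tau> where tau: "\<tau> > 0" "\<forall>w\<in>L. \<forall>b. 0 < b \<and> b \<le> \<tau> \<longrightarrow> phi b w \<noteq> w" using min_period by blast
  define c where "c = min (\<epsilon>/2) \<tau>"
  have c: "c > 0" "c \<le> \<tau>" "c \<le> \<epsilon>/2" using eps tau by (auto simp: c_def)
  obtain m1 where m1: "m1 > 0" "\<forall>w\<in>L. dist (phi c w) w \<ge> m1 \<and> dist (phi (-c) w) w \<ge> m1"
    using gap[OF c(1,2) tau(2) ne] by blast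
  obtain dSE where dSE: "dSE > 0" "\<forall>x\<in>X. \<forall>y\<in>X. \<forall>s::real \<Rightarrow> real.
        (mono s \<and> (\<exists>g. homeomorphism UNIV UNIV s g) \<and>
         (\<forall>t. dist (phi t x) (phi (s t) y) \<le> dSE * distX X (phi t x) (Sing X phi)))
        \<longrightarrow> (\<exists>t0. phi (s t0) y \<in> (\<lambda>t. phi t x) ` {t0 - c/2 .. t0 + c/2})"
    using SE c(1) unfolding singular_expansive_def by (meson half_gt_zero)
  define \<beta> where "\<beta> = min (m1/2) (dSE * \<kappa>)"
  have beta: "\<beta> > 0" "\<beta> \<le> m1/2" "\<beta> \<le> dSE * \<kappa>" using m1 dSE kap by (auto simp: \<beta>_def)
  obtain c2' where c2': "c2' > 0" "\<forall>z\<in>L. \<forall>r. \<bar>r\<bar> \<le> c2' \<longrightarrow> dist (phi r z) z < \<beta>/2"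
    using U1[of "\<beta>/2"] beta by auto
  define c2 where "c2 = min c2' (min \<tau> (\<epsilon>/2))"
  have c2: "c2 > 0" "c2 \<le> \<tau>" "c2 \<le> \<epsilon>/2" "c2 \<le> c2'" using eps tau c2' by (auto simp: c2_def)
  obtain m2 where m2: "m2 > 0" "\<forall>w\<in>L. dist (phi c2 w) w \<ge> m2 \<and> dist (phi (-c2) w) w \<ge> m2"
    using gap[OF c2(1,2) tau(2) ne] by blast
  obtain d1 where d1: "d1 > 0" "\<forall>z\<in>L. \<forall>z'\<in>L. \<forall>a. 0 \<le> a \<and> a \<le> 3*c2 \<and> dist z z' \<le> d1 \<longrightarrow> dist (phi a z) (phi a z') < m2/2"
    using U2[of "m2/2" "3*c2"] m2 by auto
  define \<delta> where "\<delta> = min (\<beta>/2) (min d1 (m2/4))"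
  have delta: "\<delta> > 0" "\<delta> \<le> \<beta>/2" "\<delta> \<le> d1" "\<delta> \<le> m2/4" using beta d1 m2 by (auto simp: \<delta>_def)
  show "\<exists>\<delta>>0. \<forall>x\<in>L. \<forall>y\<in>L. \<forall>s::real \<Rightarrow> real.
        (continuous_on UNIV s \<and> s 0 = 0 \<and> (\<forall>t. dist (phi t x) (phi (s t) y) \<le> \<delta>))
        \<longrightarrow> y \<in> (\<lambda>t. phi t x) ` {-\<epsilon> .. \<epsilon>}"
  proof (intro exI[of _ \<delta>] conjI ballI allI impI delta(1))
    fix x y and s :: "real \<Rightarrow> real"
    assume x: "x \<in> L" and y: "y \<in> L"
      and H: "continuous_on UNIV s \<and> s 0 = 0 \<and> (\<forall>t. dist (phi t x) (phi (s t) y) \<le> \<delta>)"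
    have sc: "continuous_on UNIV s" and s0: "s 0 = 0" and cl: "\<And>t. dist (phi t x) (phi (s t) y) \<le> \<delta>"
      using H by auto
    have xX: "x \<in> X" and yX: "y \<in> X" using x y inX by auto
    have Fb: "\<bar>s (t+a) - s t - a\<bar> < c2" if a: "0 \<le> a" "a \<le> 3*c2" for t a
    proof -
      define Fn where "Fn b = s (t+b) - s t - b" for b
      have notc: "\<bar>Fn b\<bar> \<noteq> c2" if b: "0 \<le> b" "b \<le> 3*c2" for b
      proof
        assume eq: "\<bar>Fn b\<bar> = c2"
        define w where "w = phi (s t + b) y"
        have wL: "w \<in> L" using inL y by (simp add: w_def)
        have w2: "w = phi b (phi (s t) y)" using grp[OF yX, of b "s t"] by (simp add: w_def add.commute)
        have pw: "phi (Fn b) w = phi (s (t+b)) y"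
          using grp[OF yX, of "Fn b" "s t + b"] by (simp add: w_def Fn_def)
        have "dist (phi (s (t+b)) y) (phi (t+b) x) \<le> \<delta>" using cl[of "t+b"] by (simp add: dist_commute)
        moreover have "dist (phi (t+b) x) w < m2/2"
        proof -
          have "phi (t+b) x = phi b (phi t x)" using grp[OF xX, of b t] by (simp add: add.commute)
          moreover have "dist (phi t x) (phi (s t) y) \<le> d1" using cl[of t] delta by linarith
          ultimately show ?thesis using d1(2) inL x y b w2 by auto
        qed
        ultimately have "dist (phi (s (t+b)) y) w < m2"
          using dist_triangle[of "phi (s (t+b)) y" w "phi (t+b) x"] delta by linarith
        hence "dist (phi (Fn b) w) w < m2" using pw by simp
        moreover have "dist (phi (Fn b) w) w \<ge> m2"
          using eq m2(2) wL by (cases "Fn b \<ge> 0") auto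
        ultimately show False by linarith
      qed
      have Fc: "continuous_on {0..a} Fn" unfolding Fn_def
        by (intro continuous_intros continuous_on_compose2[OF sc]) auto
      have F0: "Fn 0 = 0" by (simp add: Fn_def)
      show ?thesis
      proof (rule ccontr)
        assume "\<not> ?thesis"
        hence "Fn a \<ge> c2 \<or> Fn a \<le> -c2" by (auto simp: Fn_def)
        then obtain b where "0 \<le> b" "b \<le> a" "\<bar>Fn b\<bar> = c2"
        proof
          assume "Fn a \<ge> c2"
          then obtain b where "0 \<le> b" "b \<le> a" "Fn b = c2"
            using IVT'[of Fn 0 c2 a] F0 Fc c2 a by auto
          then show ?thesis using that c2 by auto
        next
          assume "Fn a \<le> -c2"
          then obtain b where "0 \<le> b" "b \<le> a" "Fn b = -c2"
            using IVT2'[of Fn a "-c2" 0] F0 Fc c2 a by auto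
          then show ?thesis using that c2 by auto
        qed
        then show False using notc a by auto
      qed
    qed
    obtain h where h: "mono h" "\<exists>g. homeomorphism UNIV UNIV h g" "\<And>t. \<bar>h t - s t\<bar> \<le> c2"
      using reparam[OF c2(1) sc Fb] by blast
    have hc: "continuous_on UNIV h" using h(2) homeomorphism_def by blast
    have hclose: "dist (phi t x) (phi (h t) y) \<le> \<beta>" for t
    proof -
      have "phi (h t) y = phi (h t - s t) (phi (s t) y)" using grp[OF yX, of "h t - s t" "s t"] by simp
      moreover have "\<bar>h t - s t\<bar> \<le> c2'" using h(3)[of t] c2 by linarith
      ultimately have "dist (phi (h t) y) (phi (s t) y) < \<beta>/2" using c2'(2) inL y by auto
      then show ?thesis using cl[of t] delta dist_triangle[of "phi t x" "phi (h t) y" "phi (s t) y"]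
        by (simp add: dist_commute)
    qed
    have "\<exists>t0. phi (h t0) y \<in> (\<lambda>t. phi t x) ` {t0 - c/2 .. t0 + c/2}"
    proof -
      have "\<forall>t. dist (phi t x) (phi (h t) y) \<le> dSE * distX X (phi t x) (Sing X phi)"
      proof
        fix t
        have "dSE * \<kappa> \<le> dSE * distX X (phi t x) (Sing X phi)"
          using kap(2) inL x dSE(1) by (auto intro!: mult_left_mono)
        then show "dist (phi t x) (phi (h t) y) \<le> dSE * distX X (phi t x) (Sing X phi)"
          using hclose[of t] beta by linarith
      qed
      then show ?thesis using dSE(2) xX yX h(1,2) by blast
    qed
    then obtain t0 u where tu: "u \<in> {t0 - c/2 .. t0 + c/2}" "phi (h t0) y = phi u x" by blast
    define r where "r = u - h t0"
    have yr: "y = phi r x"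
    proof -
      have "y = phi (- h t0) (phi (h t0) y)" using grp[OF yX, of "- h t0" "h t0"] id0[OF yX] by simp
      also have "\<dots> = phi r x" using tu(2) grp[OF xX, of "- h t0" u] by (simp add: r_def)
      finally show ?thesis .
    qed
    define g where "g t = h t + r - t" for t
    have gc: "continuous_on UNIV g" unfolding g_def by (intro continuous_intros hc)
    have gnot: "\<bar>g t\<bar> \<noteq> c" for t
    proof
      assume eq: "\<bar>g t\<bar> = c"
      define w where "w = phi t x"
      have wL: "w \<in> L" using inL x by (simp add: w_def)
      have "phi (g t) w = phi (h t) y"
        using grp[OF xX, of "g t" t] grp[OF xX, of "h t" r] yr by (simp add: w_def g_def)
      hence "dist (phi (g t) w) w \<le> m1/2" using hclose[of t] beta by (simp add: w_def dist_commute)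
      moreover have "dist (phi (g t) w) w \<ge> m1"
        using eq m1(2) wL by (cases "g t \<ge> 0") auto
      ultimately show False using m1 by linarith
    qed
    have gt0: "\<bar>g t0\<bar> < c"
    proof -
      have "g t0 = u - t0" by (simp add: g_def r_def)
      then show ?thesis using tu(1) c by auto
    qed
    have agc: "continuous_on UNIV (\<lambda>t. \<bar>g t\<bar>)" by (intro continuous_intros gc)
    have g0: "\<bar>g 0\<bar> < c"
    proof (rule ccontr)
      assume "\<not> ?thesis"
      hence c0: "\<bar>g 0\<bar> \<ge> c" by simp
      have "\<exists>t. \<bar>g t\<bar> = c"
      proof (cases "t0 \<le> 0")
        case True
        then show ?thesis using IVT'[of "\<lambda>t. \<bar>g t\<bar>" t0 c 0] gt0 c0 continuous_on_subset[OF agc] by auto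
      next
        case False
        then show ?thesis using IVT2'[of "\<lambda>t. \<bar>g t\<bar>" t0 c 0] gt0 c0 continuous_on_subset[OF agc] by auto
      qed
      then show False using gnot by blast
    qed
    have "\<bar>h 0\<bar> \<le> c2" using h(3)[of 0] s0 by simp
    moreover have "g 0 = h 0 + r" by (simp add: g_def)
    ultimately have "\<bar>r\<bar> \<le> \<epsilon>" using g0 c c2 by linarith
    then show "y \<in> (\<lambda>t. phi t x) ` {-\<epsilon> .. \<epsilon>}" using yr by (intro image_eqI[of _ _ r]) auto
  qed
qed

end

theorem mainTheorem15:
  fixes X :: "'a::metric_space set" and phi :: "real \<Rightarrow> 'a \<Rightarrow> 'a"
  assumes "compact X" and "is_flow X phi" and "singular_expansive X phi"
  shows "\<forall>\<Lambda>. \<Lambda> \<subseteq> X \<and> compact \<Lambda> \<and> (\<forall>t. phi t ` \<Lambda> = \<Lambda>) \<and> \<Lambda> \<inter> Sing X phi = {}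
           \<longrightarrow> is_flow \<Lambda> phi \<and> expansive_flow \<Lambda> phi"
proof (intro allI impI)
  fix L assume HL: "L \<subseteq> X \<and> compact L \<and> (\<forall>t. phi t ` L = L) \<and> L \<inter> Sing X phi = {}"
  interpret lamflow X phi L using assms(2) HL by unfold_locales auto
  have "is_flow L phi"
    unfolding is_flow_def using contL inL id0 grp inX by blast
  moreover have "expansive_flow L phi"
  proof (cases "L = {}")
    case True then show ?thesis unfolding expansive_flow_def by (auto intro: exI[of _ 1])
  next
    case False then show ?thesis using expansive_part assms by blast
  qed
  ultimately show "is_flow L phi \<and> expansive_flow L phi" ..
qed


end
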